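(* Let $\mathsf{L}\in\{\mathbf{PD},\mathsf{InqL},\mathbf{PT}\}$ and let $\phi(p_1,\dots,p_n)$ be a consistent formula in the language of $\mathsf L$ with variables among $p_1,\dots,p_n$. The following are equivalent: (i) $\phi\dashv\vdash_{\mathsf L}\Theta_X$ for some nonempty team $X$ on $\{p_1,\dots,p_n\}$; (ii) $\phi$ is flat; (iii) $\phi$ is $\mathcal F$-projective in $\mathsf L$, where $\mathcal F$ is the class of all flat substitutions of $\mathsf L$.
   Context: A valuation is a function from the set Prop of propositional variables to $\{0,1\}$; a team is a set of valuations; a team on $V$ is a set of functions $V\to\{0,1\}$. Formulas of $\mathbf{PT}$: $\phi::=p\mid\bot\mid\top\mid\,=\!(\phi_1,\dots,\phi_n,\phi)\mid\neg\phi\mid\phi\wedge\phi\mid\phi\otimes\phi\mid\phi\vee\phi\mid\phi\to\phi$. Satisfaction on a team $X$: $X\models p$ iff $v(p)=1$ for all $v\in X$; $X\models\bot$ iff $X=\emptyset$; $X\models\top$ always; $\wedge$ conjunction; $X\models\phi\otimes\psi$ iff $X=Y\cup Z$ with $Y\models\phi$, $Z\models\psi$; $X\models\phi\vee\psi$ iff $X\models\phi$ or $X\models\psi$; $X\models\phi\to\psi$ iff every $Y\subseteq X$ with $Y\models\phi$ satisfies $\psi$; $X\models\neg\phi$ iff $\{v\}\not\models\phi$ for all $v\in X$; $X\models\,=\!(\phi_1,\dots,\phi_n,\psi)$ iff $X\models\bigwedge_i(\phi_i\vee(\phi_i\to\bot))\to(\psi\vee(\psi\to\bot))$. $\phi$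 is flat if for all teams $X$: $X\models\phi$ iff $\{v\}\models\phi$ for all $v\in X$. Formulas of $\mathbf{PD}$: $\phi::=p\mid\bot\mid\top\mid\,=\!(\vec\alpha,\beta)\mid\neg\phi\mid\phi\wedge\phi\mid\phi\otimes\phi$ with $\vec\alpha,\beta$ flat, same clauses (for flat arguments the dependence clause says that any $v,v'\in X$ agreeing on the truth of each $\alpha_i$ on singletons agree on the truth of $\beta$). $\mathsf{InqL}$: formulas built from $p,\bot,\top$ by $\wedge,\vee,\to$ with $\neg\phi:=\phi\to\bot$. For finite $\Gamma$, $\Gamma\vdash_{\mathsf L}\phi$ iff all formulas are in the language of $\mathsf L$ and every team satisfying all of $\Gamma$ satisfies $\phi$; $\phi\dashv\vdash_{\mathsf L}\psi$ means both directions. $\phi$ is consistent if some nonempty team satisfies it. For a nonempty team $X$ on $V=\{p_1,\dots,p_n\}$, with $p^1:=p$, $p^0:=\neg p$: $\Theta_X:=\bigotimes_{v\in X}(p_1^{v(p_1)}\wedge\dots\wedge p_n^{v(p_n)})$ when $\mathsf L=\mathbf{PD}$, and $\Theta_X:=\neg\neg\bigvee_{v\in X}(p_1^{v(p_1)}\wedge\dots\wedge p_n^{v(p_n)})$ when $\mathsf L\in\{\mathsf{InqL},\mathbf{PT}\}$. A substitution of $\mathsf L$ is a map on $\mathsf L$-formulas commuting with all connectives and atoms; it is flat if each $\sigma(p)$ is flat. For a set $\mathcal S$ of substitutions, $\phi$ is $\mathcal S$-projective in $\mathsf L$ if there is $\sigma\in\mathcal S$ with $\vdash_{\mathsf L}\sigma(\phi)$,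 and $\phi,\sigma(p)\vdash_{\mathsf L}p$ and $\phi,p\vdash_{\mathsf L}\sigma(p)$ for all propositional variables $p$. *)

theory Defs
  imports Main
begin

section \<open>Syntax of PT (PD and InqL are fragments)\<close>

type_synonym valuation = "nat \<Rightarrow> bool"
type_synonym team = "valuation set"

datatype fm =
    Var nat
  | Bot
  | Top
  | Dep "fm list" fm
  | Neg fm                (* primitive (flat) negation of PT / PD *)
  | Conj fm fm
  | Tensor fm fm
  | Disj fm fm            (* intuitionistic / inquisitive disjunction *)
  | Imp fm fm

function sat :: "team \<Rightarrow> fm \<Rightarrow> bool" where
  "sat X (Var p) = (\<forall>v\<in>X. v p)"
| "sat X Bot = (X = {})"
| "sat X Top = True"
| "sat X (Dep as b) =
     (\<forall>Y\<subseteq>X. (\<forall>a\<in>set as. sat Y a \<or> (\<forall>Z\<subseteq>Y. sat Z a \<longrightarrow> Z = {}))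
              \<longrightarrow> (sat Y b \<or> (\<forall>Z\<subseteq>Y. sat Z b \<longrightarrow> Z = {})))"
| "sat X (Neg a) = (\<forall>v\<in>X. \<not> sat {v} a)"
| "sat X (Conj a b) = (sat X a \<and> sat X b)"
| "sat X (Tensor a b) = (\<exists>Y Z. X = Y \<union> Z \<and> sat Y a \<and> sat Z b)"
| "sat X (Disj a b) = (sat X a \<or> sat X b)"
| "sat X (Imp a b) = (\<forall>Y\<subseteq>X. sat Y a \<longrightarrow> sat Y b)"
  by pat_completeness auto
termination
  by (relation "measure (size \<circ> snd)") (auto simp: less_Suc_eq_le intro: trans_le_add1 size_list_estimation')

definition flat :: "fm \<Rightarrow> bool" where
  "flat \<phi> \<longleftrightarrow> (\<forall>X. sat X \<phi> \<longleftrightarrow> (\<forall>v\<in>X. sat {v} \<phi>))"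

definition consistent :: "fm \<Rightarrow> bool" where
  "consistent \<phi> \<longleftrightarrow> (\<exists>X. X \<noteq> {} \<and> sat X \<phi>)"

fun vars :: "fm \<Rightarrow> nat set" where
  "vars (Var p) = {p}"
| "vars Bot = {}"
| "vars Top = {}"
| "vars (Dep as b) = (\<Union>a\<in>set as. vars a) \<union> vars b"
| "vars (Neg a) = vars a"
| "vars (Conj a b) = vars a \<union> vars b"
| "vars (Tensor a b) = vars a \<union> vars b"
| "vars (Disj a b) = vars a \<union> vars b"
| "vars (Imp a b) = vars a \<union> vars b"

datatype logic = PD | InqL | PT

fun in_PD :: "fm \<Rightarrow> bool" where
  "in_PD (Var p) = True"
| "in_PD Bot = True"
| "in_PD Top = True"
| "in_PD (Dep as b) = ((\<forall>a\<in>set as. in_PD a \<and> flat a) \<and> in_PD b \<and> flat b)"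
| "in_PD (Neg a) = in_PD a"
| "in_PD (Conj a b) = (in_PD a \<and> in_PD b)"
| "in_PD (Tensor a b) = (in_PD a \<and> in_PD b)"
| "in_PD (Disj a b) = False"
| "in_PD (Imp a b) = False"

fun in_InqL :: "fm \<Rightarrow> bool" where
  "in_InqL (Var p) = True"
| "in_InqL Bot = True"
| "in_InqL Top = True"
| "in_InqL (Dep as b) = False"
| "in_InqL (Neg a) = False"
| "in_InqL (Conj a b) = (in_InqL a \<and> in_InqL b)"
| "in_InqL (Tensor a b) = False"
| "in_InqL (Disj a b) = (in_InqL a \<and> in_InqL b)"
| "in_InqL (Imp a b) = (in_InqL a \<and> in_InqL b)"

fun in_L :: "logic \<Rightarrow> fm \<Rightarrow> bool" where
  "in_L PD \<phi> = in_PD \<phi>"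
| "in_L InqL \<phi> = in_InqL \<phi>"
| "in_L PT \<phi> = True"

definition entails :: "logic \<Rightarrow> fm list \<Rightarrow> fm \<Rightarrow> bool" where
  "entails L \<Gamma> \<phi> \<longleftrightarrow> (\<forall>\<gamma>\<in>set \<Gamma>. in_L L \<gamma>) \<and> in_L L \<phi> \<and>
     (\<forall>X. (\<forall>\<gamma>\<in>set \<Gamma>. sat X \<gamma>) \<longrightarrow> sat X \<phi>)"

definition interderivable :: "logic \<Rightarrow> fm \<Rightarrow> fm \<Rightarrow> bool" where
  "interderivable L \<phi> \<psi> \<longleftrightarrow> entails L [\<phi>] \<psi> \<and> entails L [\<psi>] \<phi>"

fun negL :: "logic \<Rightarrow> fm \<Rightarrow> fm" where
  "negL InqL \<phi> = Imp \<phi> Bot"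
| "negL PD \<phi> = Neg \<phi>"
| "negL PT \<phi> = Neg \<phi>"

fun bigConj :: "fm list \<Rightarrow> fm" where
  "bigConj [] = Top"
| "bigConj [a] = a"
| "bigConj (a # as) = Conj a (bigConj as)"

fun bigDisj :: "fm list \<Rightarrow> fm" where
  "bigDisj [] = Bot"
| "bigDisj [a] = a"
| "bigDisj (a # as) = Disj a (bigDisj as)"

fun bigTensor :: "fm list \<Rightarrow> fm" where
  "bigTensor [] = Bot"
| "bigTensor [a] = a"
| "bigTensor (a # as) = Tensor a (bigTensor as)"

(* a team on V: a set of functions V -> {0,1}, represented as valuations
   that are False outside V *)
definition team_on :: "nat set \<Rightarrow> team \<Rightarrow> bool" where
  "team_on V X \<longleftrightarrow> (\<forall>v\<in>X. \<forall>q. q \<notin> V \<longrightarrow> \<not> v q)"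

definition lit :: "logic \<Rightarrow> valuation \<Rightarrow> nat \<Rightarrow> fm" where
  "lit L v p = (if v p then Var p else negL L (Var p))"

definition state_fm :: "logic \<Rightarrow> nat set \<Rightarrow> valuation \<Rightarrow> fm" where
  "state_fm L V v = bigConj (map (lit L v) (sorted_list_of_set V))"

definition enum_team :: "team \<Rightarrow> valuation list" where
  "enum_team X = (SOME xs. distinct xs \<and> set xs = X)"

fun Theta :: "logic \<Rightarrow> nat set \<Rightarrow> team \<Rightarrow> fm" where
  "Theta PD V X = bigTensor (map (state_fm PD V) (enum_team X))"
| "Theta InqL V X = negL InqL (negL InqL (bigDisj (map (state_fm InqL V) (enum_team X))))"
| "Theta PT V X = negL PT (negL PT (bigDisj (map (state_fm PT V) (enum_team X))))"

fun subst :: "(nat \<Rightarrow> fm) \<Rightarrow> fm \<Rightarrow> fm" where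
  "subst s (Var p) = s p"
| "subst s Bot = Bot"
| "subst s Top = Top"
| "subst s (Dep as b) = Dep (map (subst s) as) (subst s b)"
| "subst s (Neg a) = Neg (subst s a)"
| "subst s (Conj a b) = Conj (subst s a) (subst s b)"
| "subst s (Tensor a b) = Tensor (subst s a) (subst s b)"
| "subst s (Disj a b) = Disj (subst s a) (subst s b)"
| "subst s (Imp a b) = Imp (subst s a) (subst s b)"

definition is_subst :: "logic \<Rightarrow> (nat \<Rightarrow> fm) \<Rightarrow> bool" where
  "is_subst L s \<longleftrightarrow> (\<forall>\<phi>. in_L L \<phi> \<longrightarrow> in_L L (subst s \<phi>))"

definition flat_substs :: "logic \<Rightarrow> (nat \<Rightarrow> fm) set" where
  "flat_substs L = {s. is_subst L s \<and> (\<forall>p. flat (s p))}"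

definition projective :: "logic \<Rightarrow> (nat \<Rightarrow> fm) set \<Rightarrow> fm \<Rightarrow> bool" where
  "projective L S \<phi> \<longleftrightarrow> (\<exists>s\<in>S. entails L [] (subst s \<phi>) \<and>
      (\<forall>p. entails L [\<phi>, s p] (Var p) \<and> entails L [\<phi>, Var p] (s p)))"

end

theory Submission imports Defs begin

lemma sat_empty: "sat {} \<phi>"
proof (induction \<phi>)
  case (Tensor a b) then show ?case by simp
qed auto

lemma sat_down: "sat X \<phi> \<Longrightarrow> Y \<subseteq> X \<Longrightarrow> sat Y \<phi>"
proof (induction \<phi> arbitrary: X Y)
  case (Tensor a b)
  then obtain Y1 Z1 where "X = Y1 \<union> Z1" "sat Y1 a" "sat Z1 b" by auto
  then show ?case using Tensor.IH[of Y1 "Y \<inter> Y1"] Tensor.IH[of Z1 "Y \<inter> Z1"] Tensor.prems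
    by (simp, rule_tac x="Y \<inter> Y1" in exI, rule_tac x="Y \<inter> Z1" in exI, auto)
next
  case (Dep as b)
  from Dep.prems show ?case unfolding sat.simps by (meson dual_order.trans)
next
  case (Imp a b)
  from Imp.prems show ?case by simp
qed auto

lemma img_vimage: "A \<subseteq> f ` Y \<Longrightarrow> f ` (Y \<inter> f -` A) = A"
proof
  assume "A \<subseteq> f ` Y"
  show "A \<subseteq> f ` (Y \<inter> f -` A)"
  proof
    fix x assume "x \<in> A"
    with \<open>A \<subseteq> f ` Y\<close> obtain y where "y \<in> Y" "x = f y" by blast
    then show "x \<in> f ` (Y \<inter> f -` A)" using \<open>x \<in> A\<close> by blast
  qed
qed blast

lemma all_img: "(\<forall>Z\<subseteq>Y. P (f ` Z)) = (\<forall>Z'\<subseteq>f ` Y. P Z')"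
  by (auto simp: subset_image_iff)

lemma img:
  "(\<And>p. p \<in> vars \<psi> \<Longrightarrow> flat (s p)) \<Longrightarrow> (\<And>v p. p \<in> vars \<psi> \<Longrightarrow> sat {v} (s p) = f v p)
   \<Longrightarrow> sat Y (subst s \<psi>) = sat (f ` Y) \<psi>"
proof (induction \<psi> arbitrary: Y)
  case (Var p)
  have "flat (s p)" using Var.prems(1) by simp
  then have "sat Y (s p) = (\<forall>v\<in>Y. sat {v} (s p))" unfolding flat_def by blast
  then show ?case using Var.prems(2) by simp
next
  case (Neg a)
  have "\<And>v. sat {v} (subst s a) = sat {f v} a" using Neg.IH[of "{_}"] Neg.prems by simp
  then show ?case by simp
next
  case (Conj a b) then show ?case by simp
next
  case (Disj a b) then show ?case by simp
next
  case (Tensor a b)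
  have ea: "\<And>Z. sat Z (subst s a) = sat (f`Z) a" using Tensor.IH(1) Tensor.prems by simp
  have eb: "\<And>Z. sat Z (subst s b) = sat (f`Z) b" using Tensor.IH(2) Tensor.prems by simp
  show ?case
  proof
    assume "sat Y (subst s (Tensor a b))"
    then obtain Y1 Z1 where h: "Y = Y1 \<union> Z1" "sat Y1 (subst s a)" "sat Z1 (subst s b)" by auto
    have "f ` Y = f ` Y1 \<union> f ` Z1" "sat (f`Y1) a" "sat (f`Z1) b" using h ea eb by auto
    then show "sat (f ` Y) (Tensor a b)" by (simp only: sat.simps) blast
  next
    assume "sat (f ` Y) (Tensor a b)"
    then obtain A B where AB: "f ` Y = A \<union> B" "sat A a" "sat B b" by auto
    have 1: "f ` (Y \<inter> f -` A) = A" "f ` (Y \<inter> f -` B) = B" using AB(1) by (simp_all add: img_vimage)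
    have 2: "Y = (Y \<inter> f -` A) \<union> (Y \<inter> f -` B)" using AB(1) by auto
    have "sat (Y \<inter> f -` A) (subst s a)" "sat (Y \<inter> f -` B) (subst s b)" using ea eb 1 AB by auto
    then show "sat Y (subst s (Tensor a b))" using 2 by (simp only: subst.simps sat.simps) blast
  qed
next
  case (Imp a b)
  have ea: "\<And>Z. sat Z (subst s a) = sat (f`Z) a" using Imp.IH Imp.prems by simp
  have eb: "\<And>Z. sat Z (subst s b) = sat (f`Z) b" using Imp.IH Imp.prems by simp
  have "sat Y (subst s (Imp a b)) = (\<forall>Z\<subseteq>Y. sat (f`Z) a \<longrightarrow> sat (f`Z) b)" using ea eb by simp
  also have "\<dots> = sat (f ` Y) (Imp a b)" by (simp add: all_img[where P="\<lambda>Z'. sat Z' a \<longrightarrow> sat Z' b"])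
  finally show ?case .
next
  case (Dep as b)
  have ea: "\<And>a Z. a \<in> set as \<Longrightarrow> sat Z (subst s a) = sat (f`Z) a" using Dep.IH(1) Dep.prems by fastforce
  have eb: "\<And>Z. sat Z (subst s b) = sat (f`Z) b" using Dep.IH(2) Dep.prems by simp
  have n: "\<And>c Z. (\<forall>W\<subseteq>Z. sat (f`W) c \<longrightarrow> W = {}) = (\<forall>W'\<subseteq>f`Z. sat W' c \<longrightarrow> W' = {})"
  proof -
    fix c Z
    have "(\<forall>W\<subseteq>Z. sat (f`W) c \<longrightarrow> W = {}) = (\<forall>W\<subseteq>Z. sat (f`W) c \<longrightarrow> f`W = {})" by simp
    also have "\<dots> = (\<forall>W'\<subseteq>f`Z. sat W' c \<longrightarrow> W' = {})" by (rule all_img[where P="\<lambda>W'. sat W' c \<longrightarrow> W' = {}"])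
    finally show "?thesis c Z" .
  qed
  define Q where "Q = (\<lambda>Z'. (\<forall>a\<in>set as. sat Z' a \<or> (\<forall>W'\<subseteq>Z'. sat W' a \<longrightarrow> W' = {}))
              \<longrightarrow> (sat Z' b \<or> (\<forall>W'\<subseteq>Z'. sat W' b \<longrightarrow> W' = {})))"
  have "sat Y (subst s (Dep as b)) = (\<forall>Z\<subseteq>Y. (\<forall>a\<in>set as. sat (f`Z) a \<or> (\<forall>W\<subseteq>Z. sat (f`W) a \<longrightarrow> W = {}))
              \<longrightarrow> (sat (f`Z) b \<or> (\<forall>W\<subseteq>Z. sat (f`W) b \<longrightarrow> W = {})))"
    using ea eb by simp
  also have "\<dots> = (\<forall>Z\<subseteq>Y. Q (f`Z))" unfolding Q_def n ..
  also have "\<dots> = (\<forall>Z'\<subseteq>f`Y. Q Z')" by (rule all_img)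
  also have "\<dots> = sat (f ` Y) (Dep as b)" unfolding Q_def by simp
  finally show ?case .
qed auto


lemma flatD: "flat a \<Longrightarrow> sat X a = (\<forall>v\<in>X. sat {v} a)"
  unfolding flat_def by blast

lemma flatI: "(\<And>X. sat X a = (\<forall>v\<in>X. sat {v} a)) \<Longrightarrow> flat a"
  unfolding flat_def by blast

lemma flat_Var: "flat (Var p)" by (rule flatI) simp
lemma flat_Top: "flat Top" by (rule flatI) simp
lemma flat_Bot: "flat Bot" by (rule flatI) auto
lemma flat_Neg: "flat (Neg a)" by (rule flatI) simp

lemma flat_Conj: "flat a \<Longrightarrow> flat b \<Longrightarrow> flat (Conj a b)"
proof (rule flatI)
  fix X assume "flat a" "flat b"
  have "sat X a = (\<forall>v\<in>X. sat {v} a)" "sat X b = (\<forall>v\<in>X. sat {v} b)"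
    using flatD[OF \<open>flat a\<close>] flatD[OF \<open>flat b\<close>] by blast+
  then show "sat X (Conj a b) = (\<forall>v\<in>X. sat {v} (Conj a b))" by (simp only: sat.simps) blast
qed

lemma sat_Imp_Bot: "sat X (Imp a Bot) = (\<forall>v\<in>X. \<not> sat {v} a)"
proof
  assume h: "sat X (Imp a Bot)"
  show "\<forall>v\<in>X. \<not> sat {v} a"
  proof
    fix v assume "v \<in> X"
    then have "{v} \<subseteq> X" by simp
    then show "\<not> sat {v} a" using h by auto
  qed
next
  assume h: "\<forall>v\<in>X. \<not> sat {v} a"
  show "sat X (Imp a Bot)"
  proof (simp only: sat.simps, intro allI impI)
    fix Y assume "Y \<subseteq> X" "sat Y a"
    show "Y = {}"
    proof (rule ccontr)
      assume "Y \<noteq> {}" then obtain v where "v \<in> Y" by blast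
      then have "sat {v} a" using sat_down[OF \<open>sat Y a\<close>] by simp
      then show False using h \<open>v \<in> Y\<close> \<open>Y \<subseteq> X\<close> by blast
    qed
  qed
qed

lemma sat_negL: "sat X (negL L a) = (\<forall>v\<in>X. \<not> sat {v} a)"
  by (cases L) (simp_all only: negL.simps sat_Imp_Bot, simp_all)

lemma flat_negL: "flat (negL L a)"
  by (rule flatI) (simp add: sat_negL)

lemma tensor_single: "flat a \<Longrightarrow> flat b \<Longrightarrow> sat {v} (Tensor a b) = (sat {v} a \<or> sat {v} b)"
proof -
  assume fa: "flat a" and fb: "flat b"
  show ?thesis
  proof
    assume "sat {v} (Tensor a b)"
    then obtain Y Z where "{v} = Y \<union> Z" "sat Y a" "sat Z b" by auto
    then have "v \<in> Y \<or> v \<in> Z" by blast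
    then show "sat {v} a \<or> sat {v} b" using \<open>sat Y a\<close> \<open>sat Z b\<close> flatD[OF fa, of Y] flatD[OF fb, of Z] by blast
  next
    assume "sat {v} a \<or> sat {v} b"
    then show "sat {v} (Tensor a b)"
    proof
      assume "sat {v} a" then show ?thesis using sat_empty[of b] by (simp only: sat.simps) blast
    next
      assume "sat {v} b" then show ?thesis using sat_empty[of a] by (simp only: sat.simps) blast
    qed
  qed
qed

lemma flat_Tensor: "flat a \<Longrightarrow> flat b \<Longrightarrow> flat (Tensor a b)"
proof (rule flatI)
  fix X assume fa: "flat a" and fb: "flat b"
  show "sat X (Tensor a b) = (\<forall>v\<in>X. sat {v} (Tensor a b))"
  proof
    assume "sat X (Tensor a b)"
    then obtain Y Z where "X = Y \<union> Z" "sat Y a" "sat Z b" by auto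
    then show "\<forall>v\<in>X. sat {v} (Tensor a b)"
      using flatD[OF fa, of Y] flatD[OF fb, of Z] tensor_single[OF fa fb] by blast
  next
    assume h: "\<forall>v\<in>X. sat {v} (Tensor a b)"
    have "X = {v\<in>X. sat {v} a} \<union> {v\<in>X. sat {v} b}" using h tensor_single[OF fa fb] by blast
    moreover have "sat {v\<in>X. sat {v} a} a" using flatD[OF fa] by blast
    moreover have "sat {v\<in>X. sat {v} b} b" using flatD[OF fb] by blast
    ultimately show "sat X (Tensor a b)" by (simp only: sat.simps) blast
  qed
qed

lemma sat_bigConj: "sat X (bigConj xs) = (\<forall>a\<in>set xs. sat X a)"
  by (induction xs rule: bigConj.induct) auto

lemma flat_bigConj: "(\<forall>a\<in>set xs. flat a) \<Longrightarrow> flat (bigConj xs)"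
  by (induction xs rule: bigConj.induct) (auto simp: flat_Top flat_Conj)

lemma sat_bigDisj: "xs \<noteq> [] \<Longrightarrow> sat X (bigDisj xs) = (\<exists>a\<in>set xs. sat X a)"
  by (induction xs rule: bigDisj.induct) auto

lemma bigTensor_prop: "xs \<noteq> [] \<Longrightarrow> (\<forall>a\<in>set xs. flat a) \<Longrightarrow>
   flat (bigTensor xs) \<and> (\<forall>v. sat {v} (bigTensor xs) = (\<exists>a\<in>set xs. sat {v} a))"
proof (induction xs rule: bigTensor.induct)
  case (3 a b as)
  then have ih: "flat (bigTensor (b # as))" "\<forall>v. sat {v} (bigTensor (b # as)) = (\<exists>a\<in>set (b#as). sat {v} a)" by auto
  have fa: "flat a" using 3 by simp
  show ?case using flat_Tensor[OF fa ih(1)] tensor_single[OF fa ih(1)] ih(2) by simp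
qed auto

lemma sat_lit: "sat {u} (lit L v p) = (u p = v p)"
  unfolding lit_def by (auto simp: sat_negL)

lemma flat_lit: "flat (lit L v p)"
  unfolding lit_def by (auto simp: flat_negL flat_Var)

lemma sat_state: "finite V \<Longrightarrow> sat {u} (state_fm L V v) = (\<forall>p\<in>V. u p = v p)"
  unfolding state_fm_def by (simp add: sat_bigConj sat_lit)

lemma flat_state: "flat (state_fm L V v)"
  unfolding state_fm_def by (rule flat_bigConj) (auto simp: flat_lit)

definition rr :: "nat set \<Rightarrow> valuation \<Rightarrow> valuation" where
  "rr V u = (\<lambda>q. q \<in> V \<and> u q)"

lemma team_on_finite: "finite V \<Longrightarrow> team_on V X \<Longrightarrow> finite X"
proof -
  assume "finite V" "team_on V X"
  have "X \<subseteq> (\<lambda>S q. q \<in> S) ` Pow V"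
  proof
    fix v assume "v \<in> X"
    have "v = (\<lambda>q. q \<in> {q\<in>V. v q})"
    proof
      fix q show "v q = (q \<in> {q\<in>V. v q})" using \<open>v \<in> X\<close> \<open>team_on V X\<close> unfolding team_on_def by (cases "q \<in> V") auto
    qed
    then show "v \<in> (\<lambda>S q. q \<in> S) ` Pow V" by blast
  qed
  then show "finite X" using \<open>finite V\<close> finite_subset by blast
qed

lemma set_enum: "finite X \<Longrightarrow> set (enum_team X) = X"
proof -
  assume "finite X"
  then have "\<exists>xs. distinct xs \<and> set xs = X" using finite_distinct_list[of X] by (simp add: conj_commute)
  from someI_ex[OF this] show ?thesis unfolding enum_team_def by simp
qed

lemma agree_iff: "team_on V X \<Longrightarrow> (\<exists>w\<in>X. \<forall>p\<in>V. u p = w p) = (rr V u \<in> X)"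
proof
  assume "team_on V X" "\<exists>w\<in>X. \<forall>p\<in>V. u p = w p"
  then obtain w where "w \<in> X" "\<forall>p\<in>V. u p = w p" by blast
  moreover have "rr V u = w"
  proof
    fix q show "rr V u q = w q" using calculation \<open>team_on V X\<close> unfolding rr_def team_on_def by (cases "q \<in> V") auto
  qed
  ultimately show "rr V u \<in> X" by simp
next
  assume "rr V u \<in> X" then show "\<exists>w\<in>X. \<forall>p\<in>V. u p = w p" by (intro bexI[of _ "rr V u"]) (simp_all add: rr_def)
qed

lemma Theta_prop:
  assumes "finite V" "X \<noteq> {}" "team_on V X"
  shows "flat (Theta L V X) \<and> (\<forall>u. sat {u} (Theta L V X) = (rr V u \<in> X))"
proof -
  have fX: "finite X" using team_on_finite assms by blast
  have se: "set (enum_team X) = X" using set_enum[OF fX] .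
  have ne: "map (state_fm L V) (enum_team X) \<noteq> []" using se assms(2) by auto
  have key: "(\<exists>a\<in>set (map (state_fm L V) (enum_team X)). sat {u} a) = (rr V u \<in> X)" for u
    using se agree_iff[OF assms(3)] sat_state[OF assms(1)] by auto
  show ?thesis
  proof (cases L)
    case PD
    have fl: "\<forall>a\<in>set (map (state_fm PD V) (enum_team X)). flat a" by (auto simp: flat_state)
    show ?thesis using bigTensor_prop[OF ne[unfolded PD] fl] key[unfolded PD] PD by simp
  next
    case InqL
    define D where "D = bigDisj (map (state_fm L V) (enum_team X))"
    have T: "Theta L V X = negL L (negL L D)" unfolding D_def using InqL by simp
    have "sat {u} (Theta L V X) = (rr V u \<in> X)" for u
      unfolding T sat_negL D_def using key[of u] sat_bigDisj[OF ne] by simp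
    then show ?thesis unfolding T using flat_negL by simp
  next
    case PT
    define D where "D = bigDisj (map (state_fm L V) (enum_team X))"
    have T: "Theta L V X = negL L (negL L D)" unfolding D_def using PT by simp
    have "sat {u} (Theta L V X) = (rr V u \<in> X)" for u
      unfolding T sat_negL D_def using key[of u] sat_bigDisj[OF ne] by simp
    then show ?thesis unfolding T using flat_negL by simp
  qed
qed


lemma subst_Var: "subst Var \<phi> = \<phi>"
proof (induction \<phi>)
  case (Dep as b)
  have "map (subst Var) as = as" using Dep.IH(1) by (induction as) auto
  then show ?case using Dep.IH(2) by simp
qed simp_all

lemma locality: "vars \<phi> \<subseteq> V \<Longrightarrow> sat {u} \<phi> = sat {rr V u} \<phi>"
  using img[of \<phi> Var "rr V" "{u}"] by (auto simp: subst_Var flat_Var rr_def)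

lemma subst_flat: assumes "\<forall>p. flat (s p)" "flat a" shows "flat (subst s a)"
proof (rule flatI)
  fix Y
  define f where "f = (\<lambda>v q. sat {v} (s q))"
  have e: "sat Z (subst s a) = sat (f ` Z) a" for Z
  proof (rule img)
    show "\<And>p. p \<in> vars a \<Longrightarrow> flat (s p)" using assms(1) by blast
    show "\<And>v p. p \<in> vars a \<Longrightarrow> sat {v} (s p) = f v p" unfolding f_def by (rule refl)
  qed
  have "sat Y (subst s a) = sat (f`Y) a" by (rule e)
  also have "\<dots> = (\<forall>x\<in>f`Y. sat {x} a)" by (rule flatD[OF assms(2)])
  also have "\<dots> = (\<forall>v\<in>Y. sat {f v} a)" by blast
  also have "\<dots> = (\<forall>v\<in>Y. sat {v} (subst s a))" using e[of "{_}"] by simp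
  finally show "sat Y (subst s a) = (\<forall>v\<in>Y. sat {v} (subst s a))" .
qed

lemma in_PD_subst: assumes "\<forall>p. in_PD (s p) \<and> flat (s p)" shows "in_PD a \<Longrightarrow> in_PD (subst s a)"
proof (induction a)
  case (Dep as b)
  have fs: "\<forall>p. flat (s p)" using assms by blast
  have "\<forall>x\<in>set as. in_PD (subst s x) \<and> flat (subst s x)"
    using Dep subst_flat[OF fs] by simp
  moreover have "in_PD (subst s b) \<and> flat (subst s b)" using Dep subst_flat[OF fs] by simp
  ultimately show ?case by simp
qed (use assms in simp_all)

lemma in_InqL_subst: "\<forall>p. in_InqL (s p) \<Longrightarrow> in_InqL a \<Longrightarrow> in_InqL (subst s a)"
  by (induction a) auto

lemma is_subst_I: "\<forall>p. in_L L (s p) \<and> flat (s p) \<Longrightarrow> is_subst L s"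
  unfolding is_subst_def by (cases L) (auto intro: in_PD_subst in_InqL_subst)

lemma in_L_Conj: "in_L L a \<Longrightarrow> in_L L b \<Longrightarrow> in_L L (Conj a b)" by (cases L) auto
lemma in_L_negL: "in_L L a \<Longrightarrow> in_L L (negL L a)" by (cases L) auto
lemma in_L_Var: "in_L L (Var p)" by (cases L) auto
lemma in_L_Top: "in_L L Top" by (cases L) auto
lemma in_L_Bot: "in_L L Bot" by (cases L) auto

lemma in_L_bigConj: "\<forall>a\<in>set xs. in_L L a \<Longrightarrow> in_L L (bigConj xs)"
  by (induction xs rule: bigConj.induct) (auto simp: in_L_Top in_L_Conj)

lemma in_PD_bigTensor: "\<forall>a\<in>set xs. in_PD a \<Longrightarrow> in_PD (bigTensor xs)"
  by (induction xs rule: bigTensor.induct) auto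

lemma in_InqL_bigDisj: "\<forall>a\<in>set xs. in_InqL a \<Longrightarrow> in_InqL (bigDisj xs)"
  by (induction xs rule: bigDisj.induct) auto

lemma in_L_state: "in_L L (state_fm L V v)"
  unfolding state_fm_def lit_def by (rule in_L_bigConj) (auto simp: in_L_Var in_L_negL)

lemma in_L_Theta: "in_L L (Theta L V X)"
proof (cases L)
  case PD then show ?thesis using in_L_state[of PD] by (auto intro!: in_PD_bigTensor)
next
  case InqL then show ?thesis using in_L_state[of InqL] by (auto intro!: in_InqL_bigDisj)
qed auto


lemma sat_single_Bot: "\<not> sat {v} Bot" by simp

theorem lemma4p6:
  fixes L :: logic and \<phi> :: fm and V :: "nat set"
  assumes "in_L L \<phi>" and "finite V" and "vars \<phi> \<subseteq> V" and "consistent \<phi>"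
  shows "((\<exists>X. X \<noteq> {} \<and> team_on V X \<and> interderivable L \<phi> (Theta L V X)) \<longleftrightarrow> flat \<phi>)
       \<and> (flat \<phi> \<longleftrightarrow> projective L (flat_substs L) \<phi>)"
proof -
  have A: "flat \<phi>" if "\<exists>X. X \<noteq> {} \<and> team_on V X \<and> interderivable L \<phi> (Theta L V X)"
  proof -
    from that obtain X where X: "X \<noteq> {}" "team_on V X" "interderivable L \<phi> (Theta L V X)" by blast
    have fT: "flat (Theta L V X)" using Theta_prop[OF assms(2) X(1,2)] by blast
    have eq: "sat Y \<phi> = sat Y (Theta L V X)" for Y
      using X(3) unfolding interderivable_def entails_def by auto
    show ?thesis
    proof (rule flatI)
      fix Y
      have "sat Y (Theta L V X) = (\<forall>v\<in>Y. sat {v} (Theta L V X))" by (rule flatD[OF fT])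
      then show "sat Y \<phi> = (\<forall>v\<in>Y. sat {v} \<phi>)" unfolding eq .
    qed
  qed
  define X0 where "X0 = {u. (\<forall>q. q \<notin> V \<longrightarrow> \<not> u q) \<and> sat {u} \<phi>}"
  have tX0: "team_on V X0" unfolding team_on_def X0_def by blast
  have rrV: "\<forall>q. q \<notin> V \<longrightarrow> \<not> rr V u q" for u unfolding rr_def by blast
  have keyX0: "sat {u} \<phi> = (rr V u \<in> X0)" for u
    using locality[OF assms(3), of u] rrV[of u] unfolding X0_def by blast
  obtain w where w: "w \<in> X0"
  proof -
    obtain Y where Y: "Y \<noteq> {}" "sat Y \<phi>" using assms(4) unfolding consistent_def by blast
    then obtain v where "v \<in> Y" by blast
    then have "sat {v} \<phi>" using sat_down[OF Y(2)] by blast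
    then show ?thesis using that keyX0 by blast
  qed
  have neX0: "X0 \<noteq> {}" using w by blast
  have TP: "flat (Theta L V X0) \<and> (\<forall>u. sat {u} (Theta L V X0) = (rr V u \<in> X0))"
    by (rule Theta_prop[OF assms(2) neX0 tX0])
  have B: "\<exists>X. X \<noteq> {} \<and> team_on V X \<and> interderivable L \<phi> (Theta L V X)" if fl: "flat \<phi>"
  proof (intro exI conjI)
    show "X0 \<noteq> {}" "team_on V X0" by (fact neX0, fact tX0)
    have eq: "sat Y \<phi> = sat Y (Theta L V X0)" for Y
    proof -
      have "sat Y \<phi> = (\<forall>u\<in>Y. sat {u} \<phi>)" by (rule flatD[OF fl])
      also have "\<dots> = (\<forall>u\<in>Y. rr V u \<in> X0)" using keyX0 by blast
      also have "\<dots> = (\<forall>u\<in>Y. sat {u} (Theta L V X0))" using TP by blast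
      also have "\<dots> = sat Y (Theta L V X0)" using flatD[of "Theta L V X0" Y] TP by blast
      finally show ?thesis .
    qed
    show "interderivable L \<phi> (Theta L V X0)"
      unfolding interderivable_def entails_def using assms(1) in_L_Theta eq by simp
  qed
  have C: "projective L (flat_substs L) \<phi>" if fl: "flat \<phi>"
  proof -
    define chi where "chi = Theta L V X0"
    define cd where "cd = (\<lambda>a b. negL L (Conj (negL L a) (negL L b)))"
    define \<sigma> where "\<sigma> = (\<lambda>p. if p \<in> V then cd (Conj chi (Var p)) (Conj (negL L chi) (if w p then Top else Bot)) else Var p)"
    have chi1: "sat {u} chi = (rr V u \<in> X0)" for u using TP unfolding chi_def by blast
    have sig1: "sat {u} (\<sigma> p) = (if rr V u \<in> X0 then u p else w p)" if "p \<in> V" for u p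
      using that unfolding \<sigma>_def cd_def by (simp add: sat_negL chi1)
    have sig2: "\<sigma> p = Var p" if "p \<notin> V" for p using that unfolding \<sigma>_def by simp
    have fs: "flat (\<sigma> p)" for p unfolding \<sigma>_def cd_def by (simp add: flat_negL flat_Var)
    have ins: "in_L L (\<sigma> p)" for p unfolding \<sigma>_def cd_def chi_def
      by (simp add: in_L_negL in_L_Conj in_L_Theta in_L_Var in_L_Top in_L_Bot)
    have sub: "\<sigma> \<in> flat_substs L" unfolding flat_substs_def using is_subst_I fs ins by blast
    have insub: "in_L L (subst \<sigma> \<phi>)" using sub assms(1) unfolding flat_substs_def is_subst_def by blast
    define f where "f = (\<lambda>u q. if rr V u \<in> X0 then u q else w q)"
    have e: "sat Y (subst \<sigma> \<phi>) = sat (f ` Y) \<phi>" for Y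
    proof (rule img)
      show "\<And>p. p \<in> vars \<phi> \<Longrightarrow> flat (\<sigma> p)" by (rule fs)
      show "\<And>v p. p \<in> vars \<phi> \<Longrightarrow> sat {v} (\<sigma> p) = f v p" using sig1 assms(3) unfolding f_def by blast
    qed
    have valid: "sat Y (subst \<sigma> \<phi>)" for Y
    proof -
      have "\<forall>x\<in>f ` Y. sat {x} \<phi>"
      proof
        fix x assume "x \<in> f ` Y"
        then obtain u where u: "x = f u" by blast
        show "sat {x} \<phi>"
        proof (cases "rr V u \<in> X0")
          case True
          then have "x = u" unfolding u f_def by simp
          then show ?thesis using keyX0 True by simp
        next
          case False
          then have "x = w" unfolding u f_def by simp
          then show ?thesis using w unfolding X0_def by simp
        qed
      qed
      then have "sat (f ` Y) \<phi>" using flatD[OF fl, of "f ` Y"] by blast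
      then show ?thesis using e by blast
    qed
    have phiY: "rr V v \<in> X0" if "sat Y \<phi>" "v \<in> Y" for Y v
      using flatD[OF fl, of Y] that keyX0 by blast
    have e1: "sat Y (\<sigma> p) = sat Y (Var p)" if "sat Y \<phi>" for Y p
    proof (cases "p \<in> V")
      case True
      have "sat Y (\<sigma> p) = (\<forall>v\<in>Y. sat {v} (\<sigma> p))" by (rule flatD[OF fs])
      also have "\<dots> = (\<forall>v\<in>Y. v p)" using sig1[OF True] phiY[OF that] by simp
      finally show ?thesis by simp
    next
      case False then show ?thesis using sig2 by simp
    qed
    show ?thesis unfolding projective_def
    proof (intro bexI[OF _ sub] conjI allI)
      show "entails L [] (subst \<sigma> \<phi>)" unfolding entails_def using insub valid by simp
      fix p
      show "entails L [\<phi>, \<sigma> p] (Var p)" unfolding entails_def using assms(1) ins in_L_Var e1 by auto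
      show "entails L [\<phi>, Var p] (\<sigma> p)" unfolding entails_def using assms(1) ins in_L_Var e1 by auto
    qed
  qed
  have D: "flat \<phi>" if pr: "projective L (flat_substs L) \<phi>"
  proof -
    from pr obtain s where s: "s \<in> flat_substs L" "entails L [] (subst s \<phi>)"
      "\<And>p. entails L [\<phi>, s p] (Var p)" "\<And>p. entails L [\<phi>, Var p] (s p)"
      unfolding projective_def by blast
    have fs: "flat (s p)" for p using s(1) unfolding flat_substs_def by blast
    define f where "f = (\<lambda>v q. sat {v} (s q))"
    have e: "sat Z (subst s \<phi>) = sat (f ` Z) \<phi>" for Z
    proof (rule img)
      show "\<And>p. p \<in> vars \<phi> \<Longrightarrow> flat (s p)" by (rule fs)
      show "\<And>v p. p \<in> vars \<phi> \<Longrightarrow> sat {v} (s p) = f v p" unfolding f_def by (rule refl)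
    qed
    show ?thesis
    proof (rule flatI)
      fix Y
      show "sat Y \<phi> = (\<forall>v\<in>Y. sat {v} \<phi>)"
      proof
        assume "sat Y \<phi>" then show "\<forall>v\<in>Y. sat {v} \<phi>" using sat_down by blast
      next
        assume h: "\<forall>v\<in>Y. sat {v} \<phi>"
        have fv: "f v = v" if "v \<in> Y" for v
        proof
          fix q
          have 1: "sat {v} \<phi>" using h that by blast
          have a3: "\<forall>X. sat X \<phi> \<and> sat X (s q) \<longrightarrow> sat X (Var q)" using s(3)[of q] unfolding entails_def by auto
          have a4: "\<forall>X. sat X \<phi> \<and> sat X (Var q) \<longrightarrow> sat X (s q)" using s(4)[of q] unfolding entails_def by auto
          have "sat {v} (s q) \<longrightarrow> sat {v} (Var q)" using a3 1 by blast
          moreover have "sat {v} (Var q) \<longrightarrow> sat {v} (s q)" using a4 1 by blast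
          ultimately show "f v q = v q" unfolding f_def by auto
        qed
        have "f ` Y = Y" using fv by simp
        moreover have "sat Y (subst s \<phi>)" using s(2) unfolding entails_def by auto
        ultimately show "sat Y \<phi>" using e by metis
      qed
    qed
  qed
  show ?thesis using A B C D by blast
qed

end
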